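(* Let $\nu$ be a fixed order, $a<b$, and $f,g\in C^{\infty}[a,b]$ with $g(x)\neq0$ and $g'(x)\neq0$ for all $x\in[a,b]$. Let $\mathcal{H}_{\nu}[f]=\int_a^b f(x)J_\nu(\omega g(x))\,dx$, let $\sigma_0[f]=f$ and $\sigma_k[f](x)=g(x)^{\nu+k}\frac{d}{dx}\left[\frac{\sigma_{k-1}[f](x)}{g(x)^{\nu+k}g'(x)}\right]$ for $k\ge1$, and for an integer $m\ge1$ let $$Q_m^A[f]=-\sum_{k=1}^{m}\frac{1}{(-\omega)^k}\left\{\frac{\sigma_{k-1}[f](b)}{g'(b)}J_{\nu+k}(\omega g(b))-\frac{\sigma_{k-1}[f](a)}{g'(a)}J_{\nu+k}(\omega g(a))\right\}.$$ Then $\mathcal{H}_\nu[f]-Q_m^A[f]=\mathcal{O}(\omega^{-m-3/2})$ as $\omega\to\infty$.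
   Context: $J_\nu$ is the Bessel function of the first kind of order $\nu$. *)

theory Defs
  imports "HOL-Analysis.Analysis" "HOL-Library.Landau_Symbols"
begin

text \<open>Bessel function of the first kind, via its power series, with the principal
  branch of the complex power; 1/Gamma is written rGamma (entire).
  (z/2)^(2k+nu) is written (z/2)^(2k) * (z/2) powr nu.\<close>
definition BesselJ :: "complex \<Rightarrow> complex \<Rightarrow> complex" where
  "BesselJ \<nu> z = (\<Sum>k. (-1) ^ k * rGamma (of_nat k + \<nu> + 1) / fact k
                       * (z / 2) ^ (2 * k) * (z / 2) powr \<nu>)"

definition smooth_fun :: "(real \<Rightarrow> real) \<Rightarrow> bool" where
  "smooth_fun f \<longleftrightarrow> (\<forall>n x. ((deriv ^^ n) f) differentiable (at x))"

text \<open>g(x)^mu, principal branch (agrees with the real power when g(x) > 0).\<close>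
definition gpow :: "(real \<Rightarrow> real) \<Rightarrow> real \<Rightarrow> real \<Rightarrow> complex" where
  "gpow g \<mu> x = complex_of_real (g x) powr complex_of_real \<mu>"

fun sigma :: "real \<Rightarrow> (real \<Rightarrow> real) \<Rightarrow> (real \<Rightarrow> real) \<Rightarrow> nat \<Rightarrow> real \<Rightarrow> complex" where
  "sigma \<nu> f g 0 = (\<lambda>x. complex_of_real (f x))"
| "sigma \<nu> f g (Suc k) = (\<lambda>x. gpow g (\<nu> + real (Suc k)) x *
      vector_derivative (\<lambda>y. sigma \<nu> f g k y /
          (gpow g (\<nu> + real (Suc k)) y * complex_of_real (deriv g y))) (at x))"

definition Hnu :: "real \<Rightarrow> (real \<Rightarrow> real) \<Rightarrow> (real \<Rightarrow> real) \<Rightarrow> real \<Rightarrow> real \<Rightarrow> real \<Rightarrow> complex" where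
  "Hnu \<nu> f g a b \<omega> = integral {a..b}
      (\<lambda>x. complex_of_real (f x) * BesselJ (complex_of_real \<nu>) (complex_of_real (\<omega> * g x)))"

definition QA :: "real \<Rightarrow> (real \<Rightarrow> real) \<Rightarrow> (real \<Rightarrow> real) \<Rightarrow> real \<Rightarrow> real \<Rightarrow> nat \<Rightarrow> real \<Rightarrow> complex" where
  "QA \<nu> f g a b m \<omega> = - (\<Sum>k=1..m. 1 / complex_of_real ((-\<omega>) ^ k) *
      (sigma \<nu> f g (k - 1) b / complex_of_real (deriv g b)
         * BesselJ (complex_of_real (\<nu> + real k)) (complex_of_real (\<omega> * g b))
       - sigma \<nu> f g (k - 1) a / complex_of_real (deriv g a)
         * BesselJ (complex_of_real (\<nu> + real k)) (complex_of_real (\<omega> * g a))))"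

end

theory Submission
  imports Defs
begin

fun Cn :: "nat \<Rightarrow> real set \<Rightarrow> (real \<Rightarrow> real) \<Rightarrow> bool" where
  "Cn 0 U f = continuous_on U f"
| "Cn (Suc n) U f = ((\<forall>x\<in>U. f differentiable (at x)) \<and> Cn n U (deriv f))"

definition smooth_on :: "real set \<Rightarrow> (real \<Rightarrow> real) \<Rightarrow> bool" where
  "smooth_on U f = (\<forall>n. Cn n U f)"

lemma deriv_local:
  fixes f g :: "real \<Rightarrow> real"
  assumes "open U" "x \<in> U" "\<And>y. y \<in> U \<Longrightarrow> f y = g y"
  shows "deriv f x = deriv g x"
proof -
  have "(\<lambda>D. DERIV f x :> D) = (\<lambda>D. DERIV g x :> D)"
  proof
    fix D show "DERIV f x :> D = DERIV g x :> D"
      using has_field_derivative_transform_within_open[of f D x U g]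
            has_field_derivative_transform_within_open[of g D x U f] assms by auto
  qed
  thus ?thesis unfolding deriv_def by simp
qed

lemma differentiable_local:
  fixes f g :: "real \<Rightarrow> real"
  assumes "open U" "x \<in> U" "\<And>y. y \<in> U \<Longrightarrow> f y = g y" "f differentiable (at x)"
  shows "g differentiable (at x)"
proof -
  from assms(4) have "DERIV f x :> deriv f x" by (simp add: DERIV_deriv_iff_real_differentiable)
  hence "DERIV g x :> deriv f x"
    by (rule has_field_derivative_transform_within_open) (use assms in auto)
  thus ?thesis using real_differentiable_def by blast
qed

lemma Cn_cong:
  assumes "open U" shows "Cn n U f \<Longrightarrow> (\<And>y. y \<in> U \<Longrightarrow> f y = g y) \<Longrightarrow> Cn n U g"
proof (induction n arbitrary: f g)
  case 0 thus ?case using continuous_on_cong by auto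
next
  case (Suc n)
  have d: "\<forall>x\<in>U. g differentiable (at x)"
  proof
    fix x assume x: "x \<in> U"
    show "g differentiable (at x)"
      by (rule differentiable_local[OF assms x, of f]) (use Suc.prems x in auto)
  qed
  have c: "Cn n U (deriv f)" using Suc.prems(1) by (simp only: Cn.simps)
  have "Cn n U (deriv g)"
  proof (rule Suc.IH[OF c])
    fix y assume y: "y \<in> U"
    show "deriv f y = deriv g y" by (rule deriv_local[OF assms y]) (rule Suc.prems(2))
  qed
  thus ?case using d by (simp only: Cn.simps)
qed

lemma Cn_Suc_imp: "Cn (Suc n) U f \<Longrightarrow> Cn n U f"
proof (induction n arbitrary: f)
  case 0
  have "isCont f x" if "x \<in> U" for x
    using 0 that by (simp only: Cn.simps) (blast intro: differentiable_imp_continuous_within)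
  thus ?case by (simp add: continuous_at_imp_continuous_on)
next
  case (Suc n)
  from Suc.prems have "\<forall>x\<in>U. f differentiable (at x)" "Cn (Suc n) U (deriv f)"
    unfolding Cn.simps(2)[of "Suc n"] by blast+
  with Suc.IH[of "deriv f"] show ?case unfolding Cn.simps(2)[of n] by blast
qed

lemma Cn_deriv_at: "Cn (Suc n) U f \<Longrightarrow> x \<in> U \<Longrightarrow> DERIV f x :> deriv f x"
  by (simp add: DERIV_deriv_iff_real_differentiable)

lemma Cn_const: "Cn n U (\<lambda>x. c)"
proof (induction n arbitrary: c)
  case 0 show ?case by (simp add: continuous_on_const)
next
  case (Suc n)
  have "deriv (\<lambda>x. c) = (\<lambda>x. 0)" by (rule ext) (rule DERIV_imp_deriv, rule DERIV_const)
  thus ?case using Suc by simp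
qed

lemma Cn_add: "open U \<Longrightarrow> Cn n U f \<Longrightarrow> Cn n U g \<Longrightarrow> Cn n U (\<lambda>x. f x + g x)"
proof (induction n arbitrary: f g)
  case 0 thus ?case by (auto intro: continuous_on_add)
next
  case (Suc n)
  have d: "\<forall>x\<in>U. (\<lambda>x. f x + g x) differentiable (at x)" using Suc.prems by auto
  have "Cn n U (\<lambda>x. deriv f x + deriv g x)" using Suc by auto
  moreover have "deriv f x + deriv g x = deriv (\<lambda>x. f x + g x) x" if "x \<in> U" for x
    using Suc.prems that by (intro DERIV_imp_deriv[symmetric] DERIV_add Cn_deriv_at) auto
  ultimately have "Cn n U (deriv (\<lambda>x. f x + g x))" using Cn_cong[OF Suc.prems(1)] by blast
  thus ?case using d by simp
qed

lemma Cn_mult: "open U \<Longrightarrow> Cn n U f \<Longrightarrow> Cn n U g \<Longrightarrow> Cn n U (\<lambda>x. f x * g x)"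
proof (induction n arbitrary: f g)
  case 0 thus ?case by (auto intro: continuous_on_mult)
next
  case (Suc n)
  have fS: "Cn (Suc n) U f" and gS: "Cn (Suc n) U g" using Suc.prems by blast+
  have f: "Cn n U f" "Cn n U g" using fS gS Cn_Suc_imp by blast+
  have f': "Cn n U (deriv f)" "Cn n U (deriv g)" using fS gS unfolding Cn.simps(2)[of n] by blast+
  have D: "DERIV (\<lambda>x. f x * g x) x :> deriv f x * g x + deriv g x * f x" if "x \<in> U" for x
    by (intro DERIV_mult Cn_deriv_at[OF fS that] Cn_deriv_at[OF gS that])
  have d: "\<forall>x\<in>U. (\<lambda>x. f x * g x) differentiable (at x)" using D real_differentiable_def by blast
  have "Cn n U (\<lambda>x. deriv f x * g x + f x * deriv g x)"
    by (intro Cn_add[OF Suc.prems(1)] Suc.IH[OF Suc.prems(1)] f f')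
  moreover have "deriv f x * g x + f x * deriv g x = deriv (\<lambda>x. f x * g x) x" if "x \<in> U" for x
    using DERIV_imp_deriv[OF D[OF that]] by (simp add: mult.commute)
  ultimately have "Cn n U (deriv (\<lambda>x. f x * g x))" using Cn_cong[OF Suc.prems(1)] by blast
  thus ?case using d unfolding Cn.simps(2)[of n] by blast
qed

lemma Cn_inverse: "open U \<Longrightarrow> Cn n U f \<Longrightarrow> (\<forall>x\<in>U. f x \<noteq> 0) \<Longrightarrow> Cn n U (\<lambda>x. 1 / f x)"
proof (induction n arbitrary: f)
  case 0
  have "continuous_on U f" using 0 by simp
  hence "continuous_on U (\<lambda>x. 1 / f x)" using 0 by (intro continuous_on_divide continuous_on_const) auto
  thus ?case by (simp only: Cn.simps)
next
  case (Suc n)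
  have fS: "Cn (Suc n) U f" using Suc.prems by blast
  have f: "Cn n U f" using fS Cn_Suc_imp by blast
  have f': "Cn n U (deriv f)" using fS unfolding Cn.simps(2)[of n] by blast
  have D: "DERIV (\<lambda>x. 1 / f x) x :> - deriv f x * (1 / f x) * (1 / f x)" if "x \<in> U" for x
  proof -
    have "DERIV (\<lambda>x. inverse (f x)) x :> - (deriv f x * inverse (f x ^ Suc (Suc 0)))"
      by (rule DERIV_inverse_fun[OF Cn_deriv_at[OF fS that]]) (use Suc.prems(3) that in blast)
    thus ?thesis by (simp add: inverse_eq_divide power2_eq_square)
  qed
  have d: "\<forall>x\<in>U. (\<lambda>x. 1 / f x) differentiable (at x)" using D real_differentiable_def by blast
  have i: "Cn n U (\<lambda>x. 1 / f x)" using Suc.IH[OF Suc.prems(1) f Suc.prems(3)] .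
  have "Cn n U (\<lambda>x. (- 1) * deriv f x * (1 / f x) * (1 / f x))"
    by (intro Cn_mult[OF Suc.prems(1)] Cn_const f' i)
  moreover have "(- 1) * deriv f x * (1 / f x) * (1 / f x) = deriv (\<lambda>x. 1 / f x) x" if "x \<in> U" for x
    using DERIV_imp_deriv[OF D[OF that]] by simp
  ultimately have "Cn n U (deriv (\<lambda>x. 1 / f x))" using Cn_cong[OF Suc.prems(1)] by blast
  thus ?case using d unfolding Cn.simps(2)[of n] by blast
qed

lemma smooth_on_add: "open U \<Longrightarrow> smooth_on U f \<Longrightarrow> smooth_on U g \<Longrightarrow> smooth_on U (\<lambda>x. f x + g x)"
  unfolding smooth_on_def by (blast intro: Cn_add)
lemma smooth_on_mult: "open U \<Longrightarrow> smooth_on U f \<Longrightarrow> smooth_on U g \<Longrightarrow> smooth_on U (\<lambda>x. f x * g x)"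
  unfolding smooth_on_def by (blast intro: Cn_mult)
lemma smooth_on_const: "smooth_on U (\<lambda>x. c)"
  unfolding smooth_on_def by (blast intro: Cn_const)
lemma smooth_on_divide:
  assumes "open U" "smooth_on U f" "smooth_on U g" "\<forall>x\<in>U. g x \<noteq> 0"
  shows "smooth_on U (\<lambda>x. f x / g x)"
proof -
  have "Cn n U (\<lambda>x. f x * (1 / g x))" for n
    using assms unfolding smooth_on_def by (intro Cn_mult Cn_inverse) auto
  thus ?thesis unfolding smooth_on_def by simp
qed
lemma smooth_on_diff: "open U \<Longrightarrow> smooth_on U f \<Longrightarrow> smooth_on U g \<Longrightarrow> smooth_on U (\<lambda>x. f x - g x)"
proof -
  assume "open U" "smooth_on U f" "smooth_on U g"
  hence "smooth_on U (\<lambda>x. f x + (-1) * g x)" by (intro smooth_on_add smooth_on_mult smooth_on_const)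
  thus ?thesis by simp
qed
lemma smooth_on_deriv: "smooth_on U f \<Longrightarrow> smooth_on U (deriv f)"
  unfolding smooth_on_def by (metis Cn.simps(2))
lemma smooth_on_DERIV: "smooth_on U f \<Longrightarrow> x \<in> U \<Longrightarrow> DERIV f x :> deriv f x"
  unfolding smooth_on_def by (meson Cn_deriv_at)
lemma smooth_on_cont: "smooth_on U f \<Longrightarrow> continuous_on U f"
  unfolding smooth_on_def by (metis Cn.simps(1))

lemma smooth_fun_smooth_on: "smooth_fun f \<Longrightarrow> smooth_on U f"
proof -
  assume sf: "smooth_fun f"
  have "\<forall>j. Cn n U ((deriv ^^ j) f)" for n
  proof (induction n)
    case 0
    show ?case using sf unfolding smooth_fun_def
      by (auto intro!: continuous_at_imp_continuous_on differentiable_imp_continuous_within)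
  next
    case (Suc n)
    show ?case
    proof
      fix j
      have "Cn n U ((deriv ^^ Suc j) f)" using Suc by blast
      thus "Cn (Suc n) U ((deriv ^^ j) f)" using sf unfolding smooth_fun_def by simp
    qed
  qed
  hence "Cn n U ((deriv ^^ 0) f)" for n by blast
  thus ?thesis unfolding smooth_on_def by simp
qed

lemma smooth_on_subset: "smooth_on U f \<Longrightarrow> V \<subseteq> U \<Longrightarrow> smooth_on V f"
proof -
  have "Cn n U f \<Longrightarrow> V \<subseteq> U \<Longrightarrow> Cn n V f" for n f
    by (induction n arbitrary: f) (auto intro: continuous_on_subset)
  thus "smooth_on U f \<Longrightarrow> V \<subseteq> U \<Longrightarrow> smooth_on V f" unfolding smooth_on_def by blast
qed


definition cB :: "real \<Rightarrow> nat \<Rightarrow> real" where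
  "cB \<mu> k = (-1)^k * rGamma (real k + \<mu> + 1) / fact k"

definition Sr :: "real \<Rightarrow> real \<Rightarrow> real" where
  "Sr \<mu> w = (\<Sum>k. cB \<mu> k * w^k)"

definition Jr :: "real \<Rightarrow> real \<Rightarrow> real" where
  "Jr \<mu> t = Sr \<mu> ((t/2)^2) * (t/2) powr \<mu>"

lemma cB_rec: "cB \<mu> k = - (real k + \<mu> + 1) * (real k + 1) * cB \<mu> (Suc k)"
proof -
  have r: "rGamma (real k + \<mu> + 1) = (real k + \<mu> + 1) * rGamma (real (Suc k) + \<mu> + 1)"
    using rGamma_plus1[of "real k + \<mu> + 1"] by (simp add: add_ac)
  have f: "fact (Suc k) = (real k + 1) * (fact k :: real)" by (simp add: algebra_simps)
  have fk: "(fact k :: real) \<noteq> 0" by simp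
  have nz: "(real k + 1) * fact k \<noteq> 0" by simp
  show ?thesis unfolding cB_def r f power_Suc using fk nz
    by (simp add: divide_simps) (simp add: algebra_simps)
qed

lemma summable_cB: "summable (\<lambda>k. cB \<mu> k * w^k)"
proof (rule summable_ratio_test[where c="1/2" and N="nat \<lceil>2*\<bar>w\<bar> + \<bar>\<mu>\<bar>\<rceil> + 1"])
  fix n assume n: "n \<ge> nat \<lceil>2*\<bar>w\<bar> + \<bar>\<mu>\<bar>\<rceil> + 1"
  hence n1: "real n \<ge> 2*\<bar>w\<bar> + \<bar>\<mu>\<bar> + 1" by linarith
  have a1: "\<bar>real n + \<mu> + 1\<bar> \<ge> 1" using n1 by linarith
  have a2: "real n + 1 \<ge> 2*\<bar>w\<bar>" using n1 by linarith
  have "\<bar>real n + \<mu> + 1\<bar> * (real n + 1) \<ge> 1 * (2*\<bar>w\<bar>)"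
    by (rule mult_mono) (use a1 a2 in auto)
  hence P: "\<bar>real n + \<mu> + 1\<bar> * (real n + 1) \<ge> 2*\<bar>w\<bar>" by simp
  have cabs: "\<bar>cB \<mu> n\<bar> = \<bar>real n + \<mu> + 1\<bar> * (real n + 1) * \<bar>cB \<mu> (Suc n)\<bar>"
  proof -
    have e: "\<bar>- real n - \<mu> - 1\<bar> = \<bar>real n + \<mu> + 1\<bar>" by linarith
    show ?thesis by (subst cB_rec) (simp add: abs_mult e)
  qed
  have "norm (cB \<mu> (Suc n) * w ^ Suc n) = \<bar>cB \<mu> (Suc n)\<bar> * \<bar>w\<bar> * \<bar>w\<bar>^n"
    by (simp add: abs_mult power_abs)
  also have "\<dots> \<le> \<bar>cB \<mu> (Suc n)\<bar> * ((\<bar>real n + \<mu> + 1\<bar> * (real n + 1))/2) * \<bar>w\<bar>^n"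
    by (intro mult_right_mono mult_left_mono) (use P in auto)
  also have "\<dots> = 1/2 * (\<bar>cB \<mu> n\<bar> * \<bar>w\<bar>^n)"
    using cabs by simp
  also have "\<dots> = 1/2 * norm (cB \<mu> n * w ^ n)" by (simp add: abs_mult power_abs)
  finally show "norm (cB \<mu> (Suc n) * w ^ Suc n) \<le> 1/2 * norm (cB \<mu> n * w ^ n)" .
qed simp

lemma diffs_cB: "diffs (cB \<mu>) = (\<lambda>n. - cB (\<mu>+1) n)"
proof
  fix n
  have "diffs (cB \<mu>) n = real (Suc n) * cB \<mu> (Suc n)" by (simp add: diffs_def)
  also have "\<dots> = - cB (\<mu>+1) n"
    unfolding cB_def by (simp add: field_simps add_ac del: fact_Suc) (simp add: algebra_simps)
  finally show "diffs (cB \<mu>) n = - cB (\<mu>+1) n" .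
qed

lemma Sr_deriv: "(Sr \<mu> has_real_derivative - Sr (\<mu>+1) w) (at w)"
proof -
  have "((\<lambda>x. \<Sum>n. cB \<mu> n * x^n) has_real_derivative (\<Sum>n. diffs (cB \<mu>) n * w^n)) (at w)"
    by (rule termdiffs_strong_converges_everywhere) (rule summable_cB)
  moreover have "(\<Sum>n. diffs (cB \<mu>) n * w^n) = - Sr (\<mu>+1) w"
    unfolding diffs_cB Sr_def using summable_cB by (simp add: suminf_minus[symmetric])
  ultimately show ?thesis unfolding Sr_def[abs_def] by simp
qed

lemma Sr_three: "Sr (\<mu>-1) w + w * Sr (\<mu>+1) w = \<mu> * Sr \<mu> w"
proof -
  define d where "d k = (if k = 0 then 0 else cB (\<mu>+1) (k-1) * w^k)" for k
  have "(\<lambda>k. cB (\<mu>+1) k * w^k * w) sums (Sr (\<mu>+1) w * w)"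
    unfolding Sr_def by (rule sums_mult2) (rule summable_sums[OF summable_cB])
  hence "(\<lambda>k. d (Suc k)) sums (w * Sr (\<mu>+1) w)" by (simp add: d_def mult_ac)
  hence s1: "d sums (w * Sr (\<mu>+1) w)" by (subst (asm) sums_Suc_iff) (simp add: d_def)
  have s2: "(\<lambda>k. cB (\<mu>-1) k * w^k) sums Sr (\<mu>-1) w"
    unfolding Sr_def by (rule summable_sums[OF summable_cB])
  have s3: "(\<lambda>k. cB (\<mu>-1) k * w^k + d k) sums (Sr (\<mu>-1) w + w * Sr (\<mu>+1) w)"
    by (rule sums_add[OF s2 s1])
  have s4: "(\<lambda>k. \<mu> * (cB \<mu> k * w^k)) sums (\<mu> * Sr \<mu> w)"
    unfolding Sr_def by (rule sums_mult) (rule summable_sums[OF summable_cB])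
  have eq: "cB (\<mu>-1) k * w^k + d k = \<mu> * (cB \<mu> k * w^k)" for k
  proof (cases k)
    case 0
    have "rGamma \<mu> = \<mu> * rGamma (\<mu> + 1)" using rGamma_plus1[of \<mu>] by simp
    then show ?thesis using 0 by (simp add: d_def cB_def)
  next
    case (Suc j)
    have r: "rGamma (real j + \<mu> + 1) = (real j + \<mu> + 1) * rGamma (real j + \<mu> + 2)"
      using rGamma_plus1[of "real j + \<mu> + 1"] by (simp add: add_ac)
    have f: "fact (Suc j) = (real j + 1) * (fact j :: real)" by (simp add: algebra_simps)
    have nz: "(real j + 1) * fact j \<noteq> 0" by simp
    have r2: "rGamma (real (Suc j) + (\<mu> - 1) + 1) = (real j + \<mu> + 1) * rGamma (real j + \<mu> + 2)"
      using r by (simp add: add_ac)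
    have r3: "rGamma (real j + (\<mu> + 1) + 1) = rGamma (real j + \<mu> + 2)" by (simp add: add_ac)
    have r4: "rGamma (real (Suc j) + \<mu> + 1) = rGamma (real j + \<mu> + 2)" by (simp add: add_ac)
    show ?thesis using Suc nz unfolding d_def cB_def
      by (simp only: r2 r3 r4 f power_Suc diff_Suc_1 if_False nat.simps) (simp add: divide_simps, simp add: algebra_simps)
  qed
  show ?thesis using s3 s4 unfolding eq using sums_unique2 by blast
qed


lemma powr_plus1: "x > 0 \<Longrightarrow> (x::real) powr (\<mu> + 1) = x * x powr \<mu>"
  by (simp add: powr_add)
lemma powr_minus1: "x > 0 \<Longrightarrow> (x::real) powr (\<mu> - 1) = x powr \<mu> / x"
  by (simp add: powr_diff)

lemma Jr_deriv1:
  assumes t: "t > 0"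
  shows "(Jr \<mu> has_real_derivative (\<mu>/t * Jr \<mu> t - Jr (\<mu>+1) t)) (at t)"
proof -
  have d1: "((\<lambda>t. (t/2)^2) has_real_derivative (t/2)) (at t)"
    by (auto intro!: derivative_eq_intros simp: field_simps power2_eq_square)
  have d2: "((\<lambda>t. Sr \<mu> ((t/2)^2)) has_real_derivative (- Sr (\<mu>+1) ((t/2)^2) * (t/2))) (at t)"
    using DERIV_chain2[OF Sr_deriv d1] .
  have d3: "((\<lambda>t. t/2) has_real_derivative (1/2)) (at t)"
    by (auto intro!: derivative_eq_intros)
  have d4: "((\<lambda>t. (t/2) powr \<mu>) has_real_derivative (\<mu> * (t/2) powr (\<mu> - 1) * (1/2))) (at t)"
    using DERIV_fun_powr[OF d3, of \<mu>] t by simp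
  have d5: "(Jr \<mu> has_real_derivative
      (- Sr (\<mu>+1) ((t/2)^2) * (t/2)) * (t/2) powr \<mu> + (\<mu> * (t/2) powr (\<mu> - 1) * (1/2)) * Sr \<mu> ((t/2)^2)) (at t)"
    unfolding Jr_def[abs_def] by (rule DERIV_mult[OF d2 d4])
  have t2: "t/2 > 0" using t by simp
  have "(- Sr (\<mu>+1) ((t/2)^2) * (t/2)) * (t/2) powr \<mu> + (\<mu> * (t/2) powr (\<mu> - 1) * (1/2)) * Sr \<mu> ((t/2)^2)
        = \<mu>/t * Jr \<mu> t - Jr (\<mu>+1) t"
    unfolding Jr_def powr_plus1[OF t2] powr_minus1[OF t2] using t by (simp add: field_simps)
  with d5 show ?thesis by simp
qed

lemma Jr_three:
  assumes t: "t > 0"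
  shows "Jr (\<mu>-1) t + Jr (\<mu>+1) t = 2*\<mu>/t * Jr \<mu> t"
proof -
  have t2: "t/2 > 0" using t by simp
  have "Jr (\<mu>-1) t + Jr (\<mu>+1) t = (Sr (\<mu>-1) ((t/2)^2) + (t/2)^2 * Sr (\<mu>+1) ((t/2)^2)) * (t/2) powr \<mu> / (t/2)"
    unfolding Jr_def powr_plus1[OF t2] powr_minus1[OF t2] using t by (simp add: field_simps power2_eq_square)
  also have "\<dots> = 2*\<mu>/t * Jr \<mu> t" unfolding Sr_three Jr_def using t by (simp add: field_simps)
  finally show ?thesis .
qed

lemma Jr_deriv2:
  assumes t: "t > 0"
  shows "(Jr \<mu> has_real_derivative (Jr (\<mu>-1) t - \<mu>/t * Jr \<mu> t)) (at t)"
proof -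
  have eq: "Jr (\<mu>-1) t - \<mu>/t * Jr \<mu> t = \<mu>/t * Jr \<mu> t - Jr (\<mu>+1) t"
    using Jr_three[OF t, of \<mu>] by (simp add: field_simps)
  show ?thesis unfolding eq by (rule Jr_deriv1[OF t])
qed

lemma Jr_deriv3:
  assumes t: "t > 0"
  shows "(Jr (\<mu>-1) has_real_derivative ((\<mu>-1)/t * Jr (\<mu>-1) t - Jr \<mu> t)) (at t)"
  using Jr_deriv1[OF t, of "\<mu>-1"] by simp


lemma Jr_energy_deriv:
  fixes \<mu> :: real
  defines "\<alpha> \<equiv> 1/2 - \<mu>" and "c \<equiv> \<mu>^2 - 1/4"
  defines "E \<equiv> (\<lambda>s. s * ((Jr (\<mu>-1) s + \<alpha> * Jr \<mu> s / s) * (Jr (\<mu>-1) s + \<alpha> * Jr \<mu> s / s)) + (s - c/s) * (Jr \<mu> s * Jr \<mu> s))"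
  assumes s: "s > 0"
  shows "(E has_real_derivative 2*c*(Jr \<mu> s)^2/s^2) (at s)"
proof -
  note hA = Jr_deriv2[OF s, of \<mu>]
  note hB = Jr_deriv3[OF s, of \<mu>]
  show ?thesis
    unfolding E_def
    apply (rule derivative_eq_intros hA hB | use s in force)+
    unfolding \<alpha>_def c_def using s by (simp add: field_simps power2_eq_square)
qed

lemma Jr_bound: "\<exists>C T. T > 0 \<and> (\<forall>t\<ge>T. \<bar>Jr \<mu> t\<bar> \<le> C / sqrt t)"
proof -
  define \<alpha> where "\<alpha> = 1/2 - \<mu>"
  define c where "c = \<mu>^2 - 1/4"
  define E where "E = (\<lambda>s. s * ((Jr (\<mu>-1) s + \<alpha> * Jr \<mu> s / s) * (Jr (\<mu>-1) s + \<alpha> * Jr \<mu> s / s)) + (s - c/s) * (Jr \<mu> s * Jr \<mu> s))"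
  define K where "K = \<bar>c\<bar>"
  define T where "T = 1 + 2 * K"
  define G where "G = (\<lambda>s. E s * exp (2 * K / s^2))"
  have T1: "T \<ge> 1" unfolding T_def K_def by simp
  have dE: "(E has_real_derivative 2*c*(Jr \<mu> s)^2/s^2) (at s)" if "s > 0" for s
    unfolding E_def c_def \<alpha>_def by (rule Jr_energy_deriv[OF that])
  have Elow: "E s \<ge> s * (Jr \<mu> s)^2 / 2" if "s \<ge> T" for s
  proof -
    have s1: "s \<ge> 1" using that T1 by simp
    have "s * s \<ge> 1 * s" by (rule mult_right_mono) (use s1 in auto)
    hence "s * s \<ge> 2 * c" using that unfolding T_def K_def by linarith
    hence "c / s \<le> s / 2" using s1 by (simp add: field_simps)
    hence h: "s - c/s \<ge> s/2" by simp
    have "(s - c/s) * (Jr \<mu> s * Jr \<mu> s) \<ge> s/2 * (Jr \<mu> s * Jr \<mu> s)"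
      by (rule mult_right_mono[OF h]) simp
    moreover have "s * ((Jr (\<mu>-1) s + \<alpha> * Jr \<mu> s / s) * (Jr (\<mu>-1) s + \<alpha> * Jr \<mu> s / s)) \<ge> 0"
      using s1 by simp
    ultimately show ?thesis unfolding E_def power2_eq_square by linarith
  qed
  have dG: "(G has_real_derivative (2*c*(Jr \<mu> s)^2/s^2 * exp (2 * K / s^2) + E s * (exp (2 * K / s^2) * (- (4 * K / s^3))))) (at s)"
    if "s > 0" for s
    unfolding G_def
    apply (rule derivative_eq_intros dE[OF that] | use that in force)+
    using that by (simp add: field_simps power2_eq_square power3_eq_cube power4_eq_xxxx)
  have dGneg: "2*c*(Jr \<mu> s)^2/s^2 * exp (2 * K / s^2) + E s * (exp (2 * K / s^2) * (- (4 * K / s^3))) \<le> 0"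
    if "s \<ge> T" for s
  proof -
    have s0: "s > 0" using that T1 by simp
    have "2*c*(Jr \<mu> s)^2/s^2 \<le> 2*K*(Jr \<mu> s)^2/s^2"
      unfolding K_def by (intro divide_right_mono mult_right_mono) auto
    also have "\<dots> = 2*K*(s*(Jr \<mu> s)^2)/s^3" using s0 by (simp add: field_simps power2_eq_square power3_eq_cube)
    also have "\<dots> \<le> 2*K*(2 * E s)/s^3"
      using Elow[OF that] s0 unfolding K_def by (intro divide_right_mono mult_left_mono) auto
    finally have "2*c*(Jr \<mu> s)^2/s^2 \<le> 4*K*E s/s^3" by simp
    hence "2*c*(Jr \<mu> s)^2/s^2 * exp (2 * K / s^2) \<le> 4*K*E s/s^3 * exp (2 * K / s^2)"
      by (rule mult_right_mono) simp
    thus ?thesis by (simp add: field_simps)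
  qed
  have Gdec: "G s \<le> G T" if "s \<ge> T" for s
  proof (rule DERIV_nonpos_imp_decreasing_open[OF that])
    fix x assume "T < x" "x < s"
    thus "\<exists>y. (G has_real_derivative y) (at x) \<and> y \<le> 0"
      using dG[of x] dGneg[of x] T1 by auto
  next
    have "isCont G x" if "x \<in> {T..s}" for x
      using dG[of x] that T1 DERIV_isCont by auto
    thus "continuous_on {T..s} G" by (intro continuous_at_imp_continuous_on) auto
  qed
  define C where "C = sqrt (2 * G T)"
  show ?thesis
  proof (intro exI conjI allI impI)
    show "T > 0" using T1 by simp
    fix t assume t: "t \<ge> T"
    have t0: "t > 0" using t T1 by simp
    have "t * (Jr \<mu> t)^2 / 2 \<le> E t" by (rule Elow[OF t])
    also have "\<dots> \<le> G t"
    proof -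
      have E0: "E t \<ge> 0" using Elow[OF t] t0 by (smt (verit) divide_nonneg_nonneg mult_nonneg_nonneg zero_le_power2)
      have "exp (2 * K / t^2) \<ge> 1" unfolding K_def using t0 by simp
      hence "E t * 1 \<le> E t * exp (2 * K / t^2)" by (rule mult_left_mono) (rule E0)
      thus ?thesis unfolding G_def by simp
    qed
    also have "\<dots> \<le> G T" by (rule Gdec[OF t])
    finally have "(Jr \<mu> t)^2 \<le> 2 * G T / t" using t0 by (simp add: field_simps)
    hence "sqrt ((Jr \<mu> t)^2) \<le> sqrt (2 * G T / t)" by (rule real_sqrt_le_mono)
    thus "\<bar>Jr \<mu> t\<bar> \<le> C / sqrt t" unfolding C_def by (simp add: real_sqrt_divide)
  qed
qed


definition kap :: "real \<Rightarrow> real \<Rightarrow> complex" where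
  "kap s \<mu> = (if s < 0 then exp (\<i> * complex_of_real pi * complex_of_real \<mu>) else 1)"

lemma cpow_real:
  assumes "t \<noteq> 0"
  shows "complex_of_real t powr complex_of_real \<mu> = kap t \<mu> * complex_of_real (\<bar>t\<bar> powr \<mu>)"
  using assms unfolding kap_def powr_of_real_if by auto

lemma BesselJ_real:
  assumes t: "t \<noteq> 0"
  shows "BesselJ (complex_of_real \<mu>) (complex_of_real t) = kap t \<mu> * complex_of_real (Jr \<mu> \<bar>t\<bar>)"
proof -
  define Z where "Z = (complex_of_real t / 2) powr complex_of_real \<mu>"
  define w where "w = (\<bar>t\<bar>/2)^2"
  have Z: "Z = kap t \<mu> * complex_of_real ((\<bar>t\<bar>/2) powr \<mu>)"
  proof -
    have "Z = complex_of_real (t/2) powr complex_of_real \<mu>" unfolding Z_def by simp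
    also have "\<dots> = kap (t/2) \<mu> * complex_of_real (\<bar>t/2\<bar> powr \<mu>)" by (rule cpow_real) (use t in simp)
    also have "kap (t/2) \<mu> = kap t \<mu>" unfolding kap_def by simp
    finally show ?thesis by simp
  qed
  have tm: "(-1) ^ k * rGamma (of_nat k + complex_of_real \<mu> + 1) / fact k
                       * (complex_of_real t / 2) ^ (2 * k) * Z = complex_of_real (cB \<mu> k * w^k) * Z" for k
  proof -
    have r: "rGamma (of_nat k + complex_of_real \<mu> + 1) = complex_of_real (rGamma (real k + \<mu> + 1))"
      by (subst rGamma_complex_of_real[symmetric]) simp
    have p: "(complex_of_real t / 2) ^ (2 * k) = complex_of_real (w^k)"
      unfolding w_def by (simp add: power_mult power2_abs power_divide)
    show ?thesis unfolding r p cB_def by simp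
  qed
  have sm: "summable (\<lambda>k. complex_of_real (cB \<mu> k * w^k))"
    using summable_cB[of \<mu> w] by (simp only: summable_of_real_iff)
  have "BesselJ (complex_of_real \<mu>) (complex_of_real t) = (\<Sum>k. complex_of_real (cB \<mu> k * w^k) * Z)"
    unfolding BesselJ_def Z_def[symmetric] tm ..
  also have "\<dots> = (\<Sum>k. complex_of_real (cB \<mu> k * w^k)) * Z" by (rule suminf_mult2[OF sm, symmetric])
  also have "(\<Sum>k. complex_of_real (cB \<mu> k * w^k)) = complex_of_real (Sr \<mu> w)"
  proof -
    have "(\<lambda>k. cB \<mu> k * w^k) sums Sr \<mu> w" unfolding Sr_def by (rule summable_sums[OF summable_cB])
    hence "(\<lambda>k. complex_of_real (cB \<mu> k * w^k)) sums complex_of_real (Sr \<mu> w)"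
      by (simp only: sums_of_real_iff)
    thus ?thesis by (rule sums_unique[symmetric])
  qed
  finally show ?thesis unfolding Z Jr_def w_def by simp
qed

lemma kap_shift: "kap s (\<mu> + real k) = (if s < 0 then (-1)^k else 1) * kap s \<mu>"
proof -
  have "exp (\<i> * complex_of_real pi * complex_of_real (\<mu> + real k)) =
        exp (\<i> * complex_of_real pi * complex_of_real \<mu>) * exp (of_nat k * (\<i> * complex_of_real pi))"
    by (simp add: exp_add[symmetric] algebra_simps)
  also have "exp (of_nat k * (\<i> * complex_of_real pi)) = (-1)^k"
    by (simp add: exp_of_nat_mult)
  finally show ?thesis unfolding kap_def by (simp add: mult.commute)
qed

lemma kap_nz: "kap s \<mu> \<noteq> 0" unfolding kap_def by simp
lemma norm_kap: "norm (kap s \<mu>) = 1" unfolding kap_def by (simp add: norm_exp_eq_Re)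


fun rr :: "real \<Rightarrow> (real \<Rightarrow> real) \<Rightarrow> (real \<Rightarrow> real) \<Rightarrow> nat \<Rightarrow> real \<Rightarrow> real" where
  "rr \<nu> f h 0 = f"
| "rr \<nu> f h (Suc k) = (\<lambda>x. deriv (rr \<nu> f h k) x / deriv h x
      - (\<nu> + real (Suc k)) * rr \<nu> f h k x / h x
      - rr \<nu> f h k x * deriv (deriv h) x / (deriv h x * deriv h x))"

lemma rr_smooth:
  assumes U: "open U" and f: "smooth_on U f" and h: "smooth_on U h"
    and h0: "\<forall>x\<in>U. h x \<noteq> 0" and h1: "\<forall>x\<in>U. deriv h x \<noteq> 0"
  shows "smooth_on U (rr \<nu> f h k)"
proof (induction k)
  case 0 thus ?case using f by simp
next
  case (Suc k)
  have h': "smooth_on U (deriv h)" and h'': "smooth_on U (deriv (deriv h))"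
    using h smooth_on_deriv by blast+
  have hh: "\<forall>x\<in>U. deriv h x * deriv h x \<noteq> 0" using h1 by simp
  show ?case unfolding rr.simps
    by (intro smooth_on_diff smooth_on_divide smooth_on_mult smooth_on_deriv smooth_on_const
        U Suc h h' h'' h0 h1 hh)
qed

lemma sigma_rr:
  assumes U: "open U" and s: "s = 1 \<or> s = -1" and g: "g = (\<lambda>x. s * h x)"
    and hpos: "\<forall>x\<in>U. h x > 0" and h1: "\<forall>x\<in>U. deriv h x \<noteq> 0"
    and f: "smooth_on U f" and h: "smooth_on U h"
  shows "x \<in> U \<Longrightarrow> sigma \<nu> f g k x = complex_of_real (s^k * rr \<nu> f h k x)"
proof (induction k arbitrary: x)
  case 0 thus ?case by simp
next
  case (Suc k x)
  define \<mu> where "\<mu> = \<nu> + real (Suc k)"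
  have ss: "s * s = 1" using s by auto
  have h0: "\<forall>x\<in>U. h x \<noteq> 0" using hpos by force
  have rrs: "smooth_on U (rr \<nu> f h k)" by (rule rr_smooth[OF U f h h0 h1])
  have h': "smooth_on U (deriv h)" using h smooth_on_deriv by blast
  have gp: "gpow g \<mu> y = kap s \<mu> * complex_of_real (h y powr \<mu>)" if y: "y \<in> U" for y
  proof -
    have hy: "h y > 0" using hpos y by blast
    have gy: "g y \<noteq> 0" using hy s g by auto
    have "gpow g \<mu> y = kap (g y) \<mu> * complex_of_real (\<bar>g y\<bar> powr \<mu>)"
      unfolding gpow_def by (rule cpow_real[OF gy])
    moreover have "kap (g y) \<mu> = kap s \<mu>" using s hy g unfolding kap_def by auto
    moreover have "\<bar>g y\<bar> = h y" using s hy g by auto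
    ultimately show ?thesis by simp
  qed
  have dg: "deriv g y = s * deriv h y" if y: "y \<in> U" for y
    unfolding g by (rule DERIV_imp_deriv, rule DERIV_cmult, rule smooth_on_DERIV[OF h y])
  define q where "q y = rr \<nu> f h k y / (h y powr \<mu> * deriv h y)" for y
  define F where "F y = sigma \<nu> f g k y / (gpow g \<mu> y * complex_of_real (deriv g y))" for y
  define G where "G y = (1 / kap s \<mu>) * complex_of_real (s^Suc k * q y)" for y
  have FG: "F y = G y" if y: "y \<in> U" for y
  proof -
    have "F y = complex_of_real (s^k * rr \<nu> f h k y) / (kap s \<mu> * complex_of_real (h y powr \<mu>) * complex_of_real (s * deriv h y))"
      unfolding F_def Suc.IH[OF y] gp[OF y] dg[OF y] ..
    also have "\<dots> = (1 / kap s \<mu>) * complex_of_real (s^k * rr \<nu> f h k y / (h y powr \<mu> * (s * deriv h y)))"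
      using kap_nz[of s \<mu>] by (simp add: field_simps)
    also have "s^k * rr \<nu> f h k y / (h y powr \<mu> * (s * deriv h y)) = s^Suc k * q y"
      unfolding q_def using s by auto
    finally show ?thesis unfolding G_def .
  qed
  have x: "x \<in> U" by fact
  have hx: "h x > 0" using hpos x by blast
  have h1x: "deriv h x \<noteq> 0" using h1 x by blast
  define H where "H = h x powr \<mu>"
  have Hp: "H > 0" unfolding H_def using hx by simp
  define q' where "q' = (deriv (rr \<nu> f h k) x * (H * deriv h x)
       - rr \<nu> f h k x * (\<mu> * h x powr (\<mu> - 1) * deriv h x * deriv h x + H * deriv (deriv h) x)) / (H * deriv h x)^2"
  have dq: "DERIV q x :> q'"
  proof -
    have d1: "DERIV (\<lambda>y. h y powr \<mu>) x :> \<mu> * h x powr (\<mu> - 1) * deriv h x"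
      using DERIV_fun_powr[OF smooth_on_DERIV[OF h x] hx, of \<mu>] by simp
    have d2: "DERIV (\<lambda>y. h y powr \<mu> * deriv h y) x :>
        \<mu> * h x powr (\<mu> - 1) * deriv h x * deriv h x + deriv (deriv h) x * h x powr \<mu>"
      by (rule DERIV_mult[OF d1 smooth_on_DERIV[OF h' x]])
    have "DERIV q x :> (deriv (rr \<nu> f h k) x * (h x powr \<mu> * deriv h x) -
          (\<mu> * h x powr (\<mu> - 1) * deriv h x * deriv h x + deriv (deriv h) x * h x powr \<mu>) * rr \<nu> f h k x) /
          ((h x powr \<mu> * deriv h x) ^ Suc (Suc 0))"
      unfolding q_def[abs_def]
      by (rule DERIV_quotient[OF smooth_on_DERIV[OF rrs x] d2]) (use hx h1x in simp)
    thus ?thesis unfolding q'_def H_def by (simp add: power2_eq_square algebra_simps)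
  qed
  have dG: "(G has_vector_derivative (1 / kap s \<mu>) * complex_of_real (s^Suc k * q')) (at x)"
    unfolding G_def[abs_def]
    by (intro has_vector_derivative_mult_right has_vector_derivative_of_real DERIV_cmult dq)
  have dF: "(F has_vector_derivative (1 / kap s \<mu>) * complex_of_real (s^Suc k * q')) (at x)"
    by (rule has_vector_derivative_transform_within_open[OF dG U x]) (use FG in auto)
  have "sigma \<nu> f g (Suc k) x = gpow g \<mu> x * vector_derivative F (at x)"
    unfolding F_def[abs_def] \<mu>_def by simp
  also have "\<dots> = kap s \<mu> * complex_of_real H * ((1 / kap s \<mu>) * complex_of_real (s^Suc k * q'))"
    unfolding vector_derivative_at[OF dF] gp[OF x] H_def ..
  also have "\<dots> = complex_of_real (s^Suc k * (H * q'))"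
    using kap_nz[of s \<mu>] by (simp add: field_simps)
  also have "H * q' = rr \<nu> f h (Suc k) x"
  proof -
    have pm: "h x powr (\<mu> - 1) = H / h x" unfolding H_def using hx by (simp add: powr_diff)
    show ?thesis unfolding q'_def pm rr.simps \<mu>_def[symmetric] using Hp hx h1x
      by (simp add: field_simps power2_eq_square)
  qed
  finally show ?case .
qed


context
  fixes \<nu> a b :: real and f h :: "real \<Rightarrow> real" and U :: "real set"
  assumes ab: "a < b" and U: "open U" and abU: "{a..b} \<subseteq> U"
    and hpos: "\<forall>x\<in>U. h x > 0" and h1: "\<forall>x\<in>U. deriv h x \<noteq> 0"
    and f: "smooth_on U f" and h: "smooth_on U h"
begin

definition "II j \<omega> = integral {a..b} (\<lambda>x. rr \<nu> f h j x * Jr (\<nu> + real j) (\<omega> * h x))"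
definition "DF j \<omega> = rr \<nu> f h j b / deriv h b * Jr (\<nu> + real (Suc j)) (\<omega> * h b)
                  - rr \<nu> f h j a / deriv h a * Jr (\<nu> + real (Suc j)) (\<omega> * h a)"

lemma h0: "\<forall>x\<in>U. h x \<noteq> 0" using hpos by force
lemma rrs: "smooth_on U (rr \<nu> f h k)" by (rule rr_smooth[OF U f h h0 h1])
lemma h': "smooth_on U (deriv h)" using h smooth_on_deriv by blast

lemma Jr_comp_deriv:
  assumes x: "x \<in> U" and w: "\<omega> > 0"
  shows "DERIV (\<lambda>x. Jr \<mu> (\<omega> * h x)) x :>
           (Jr (\<mu>-1) (\<omega> * h x) - \<mu>/(\<omega> * h x) * Jr \<mu> (\<omega> * h x)) * (\<omega> * deriv h x)"
proof -
  have t: "\<omega> * h x > 0" using w hpos x by simp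
  show ?thesis
    by (rule DERIV_chain2[OF Jr_deriv2[OF t, of \<mu>] DERIV_cmult[OF smooth_on_DERIV[OF h x]]])
qed

lemma Jr_comp_cont:
  assumes w: "\<omega> > 0"
  shows "continuous_on U (\<lambda>x. Jr \<mu> (\<omega> * h x))"
proof -
  have "isCont (\<lambda>x. Jr \<mu> (\<omega> * h x)) x" if "x \<in> U" for x
    using Jr_comp_deriv[OF that w] DERIV_isCont by blast
  thus ?thesis by (simp add: continuous_at_imp_continuous_on)
qed

lemma integrand_cont:
  assumes w: "\<omega> > 0"
  shows "continuous_on {a..b} (\<lambda>x. rr \<nu> f h j x * Jr \<mu> (\<omega> * h x))"
  by (rule continuous_on_subset[OF _ abU], intro continuous_on_mult Jr_comp_cont[OF w] smooth_on_cont[OF rrs])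

lemma IBP:
  assumes w: "\<omega> > 0"
  shows "\<omega> * II j \<omega> + II (Suc j) \<omega> = DF j \<omega>"
proof -
  define \<mu> where "\<mu> = \<nu> + real (Suc j)"
  have \<mu>1: "\<mu> - 1 = \<nu> + real j" unfolding \<mu>_def by simp
  define Fx where "Fx x = rr \<nu> f h j x / deriv h x * Jr \<mu> (\<omega> * h x)" for x
  define g1 where "g1 x = rr \<nu> f h (Suc j) x * Jr \<mu> (\<omega> * h x)" for x
  define g0 where "g0 x = rr \<nu> f h j x * Jr (\<nu> + real j) (\<omega> * h x)" for x
  have dF: "DERIV Fx x :> g1 x + \<omega> * g0 x" if x: "x \<in> U" for x
  proof -
    have hx: "h x > 0" and h1x: "deriv h x \<noteq> 0" using hpos h1 x by auto
    have d1: "DERIV (\<lambda>x. rr \<nu> f h j x / deriv h x) x :>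
        (deriv (rr \<nu> f h j) x * deriv h x - deriv (deriv h) x * rr \<nu> f h j x) / (deriv h x ^ Suc (Suc 0))"
      by (rule DERIV_quotient[OF smooth_on_DERIV[OF rrs x] smooth_on_DERIV[OF h' x] h1x])
    note d2 = Jr_comp_deriv[OF x w, of \<mu>]
    have "DERIV Fx x :> (deriv (rr \<nu> f h j) x * deriv h x - deriv (deriv h) x * rr \<nu> f h j x) / (deriv h x ^ Suc (Suc 0))
           * Jr \<mu> (\<omega> * h x) + (Jr (\<mu>-1) (\<omega> * h x) - \<mu>/(\<omega> * h x) * Jr \<mu> (\<omega> * h x)) * (\<omega> * deriv h x)
           * (rr \<nu> f h j x / deriv h x)"
      unfolding Fx_def[abs_def] by (rule DERIV_mult[OF d1 d2])
    moreover have "(deriv (rr \<nu> f h j) x * deriv h x - deriv (deriv h) x * rr \<nu> f h j x) / (deriv h x ^ Suc (Suc 0))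
           * Jr \<mu> (\<omega> * h x) + (Jr (\<mu>-1) (\<omega> * h x) - \<mu>/(\<omega> * h x) * Jr \<mu> (\<omega> * h x)) * (\<omega> * deriv h x)
           * (rr \<nu> f h j x / deriv h x) = g1 x + \<omega> * g0 x"
      unfolding g1_def g0_def rr.simps \<mu>1 \<mu>_def[symmetric] using hx h1x w
      by (simp add: field_simps power2_eq_square)
    ultimately show ?thesis by simp
  qed
  have "((\<lambda>x. g1 x + \<omega> * g0 x) has_integral (Fx b - Fx a)) {a..b}"
  proof (rule fundamental_theorem_of_calculus)
    show "a \<le> b" using ab by simp
    fix x assume "x \<in> {a..b}"
    hence "x \<in> U" using abU by blast
    thus "(Fx has_vector_derivative g1 x + \<omega> * g0 x) (at x within {a..b})"
      using dF has_real_derivative_iff_has_vector_derivative has_vector_derivative_at_within by blast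
  qed
  hence "integral {a..b} (\<lambda>x. g1 x + \<omega> * g0 x) = Fx b - Fx a" by (rule integral_unique)
  moreover have "integral {a..b} (\<lambda>x. g1 x + \<omega> * g0 x) = integral {a..b} g1 + \<omega> * integral {a..b} g0"
  proof -
    have i1: "g1 integrable_on {a..b}" unfolding g1_def
      by (rule integrable_continuous_interval, rule integrand_cont[OF w])
    have i0: "g0 integrable_on {a..b}" unfolding g0_def
      by (rule integrable_continuous_interval, rule integrand_cont[OF w])
    have i0': "(\<lambda>x. \<omega> * g0 x) integrable_on {a..b}" using integrable_cmul[OF i0, of \<omega>] by simp
    have "integral {a..b} (\<lambda>x. g1 x + \<omega> * g0 x) = integral {a..b} g1 + integral {a..b} (\<lambda>x. \<omega> * g0 x)"
      by (rule integral_add[OF i1 i0'])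
    thus ?thesis by simp
  qed
  moreover have "integral {a..b} g1 = II (Suc j) \<omega>" unfolding g1_def II_def \<mu>_def by simp
  moreover have "integral {a..b} g0 = II j \<omega>" unfolding g0_def II_def by simp
  moreover have "Fx b - Fx a = DF j \<omega>" unfolding Fx_def DF_def \<mu>_def ..
  ultimately show ?thesis by simp
qed

lemma telescope:
  assumes w: "\<omega> > 0"
  shows "II 0 \<omega> = (\<Sum>k=1..n. (-1)^(k-1) / \<omega>^k * DF (k-1) \<omega>) + (-1)^n / \<omega>^n * II n \<omega>"
proof (induction n)
  case 0 thus ?case by simp
next
  case (Suc n)
  have e: "II n \<omega> = (DF n \<omega> - II (Suc n) \<omega>) / \<omega>" using IBP[OF w, of n] w by (simp add: field_simps)
  have "(-1)^n / \<omega>^n * II n \<omega> = (-1)^(Suc n - 1) / \<omega>^(Suc n) * DF (Suc n - 1) \<omega> + (-1)^Suc n / \<omega>^Suc n * II (Suc n) \<omega>"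
    unfolding e using w by (simp add: field_simps)
  thus ?case using Suc by simp
qed

lemma powr_fact: "\<omega> > 0 \<Longrightarrow> 1 / (\<omega>^(Suc m) * sqrt \<omega>) = \<omega> powr (- real m - 3/2)"
proof -
  assume w: "\<omega> > 0"
  have e: "- real m - 3/2 = - (real (Suc m) + 1/2)" by simp
  have "\<omega> powr (- real m - 3/2) = 1 / \<omega> powr (real (Suc m) + 1/2)"
    unfolding e powr_minus_divide ..
  also have "\<omega> powr (real (Suc m) + 1/2) = \<omega> powr (real (Suc m)) * \<omega> powr (1/2)"
    by (rule powr_add)
  also have "\<dots> = \<omega>^(Suc m) * sqrt \<omega>"
    using w by (simp only: powr_realpow powr_half_sqrt less_imp_le)
  finally show ?thesis by simp
qed

lemma real_bound:
  "\<exists>K \<omega>0. \<omega>0 > 0 \<and> (\<forall>\<omega>\<ge>\<omega>0.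
     \<bar>II 0 \<omega> - (\<Sum>k=1..m. (-1)^(k-1) / \<omega>^k * DF (k-1) \<omega>)\<bar> \<le> K * \<omega> powr (- real m - 3/2))"
proof -
  define \<mu>s where "\<mu>s = \<nu> + real (Suc m)"
  obtain C T where T: "T > 0" and CT: "\<forall>t\<ge>T. \<bar>Jr \<mu>s t\<bar> \<le> C / sqrt t"
    using Jr_bound by blast
  have C0: "C \<ge> 0"
  proof -
    have "0 \<le> C / sqrt T" using CT T by (meson abs_ge_zero order_trans order_refl)
    thus ?thesis using T by (simp add: zero_le_divide_iff)
  qed
  have hc: "continuous_on {a..b} h" using smooth_on_cont[OF h] abU by (rule continuous_on_subset)
  obtain xm where xm: "xm \<in> {a..b}" "\<forall>y\<in>{a..b}. h xm \<le> h y"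
    using continuous_attains_inf[OF compact_Icc _ hc] ab by auto
  define hm where "hm = h xm"
  have hm: "hm > 0" unfolding hm_def using hpos xm abU by blast
  have rc: "continuous_on {a..b} (\<lambda>x. \<bar>rr \<nu> f h (Suc m) x\<bar>)"
    using smooth_on_cont[OF rrs] abU by (intro continuous_on_rabs) (rule continuous_on_subset)
  obtain xM where xM: "xM \<in> {a..b}" "\<forall>y\<in>{a..b}. \<bar>rr \<nu> f h (Suc m) y\<bar> \<le> \<bar>rr \<nu> f h (Suc m) xM\<bar>"
    using continuous_attains_sup[OF compact_Icc _ rc] ab by auto
  define M where "M = \<bar>rr \<nu> f h (Suc m) xM\<bar>"
  define Ab where "Ab = \<bar>rr \<nu> f h m b / deriv h b\<bar> + \<bar>rr \<nu> f h m a / deriv h a\<bar>"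
  define K where "K = (Ab + M * (b - a)) * C / sqrt hm"
  define \<omega>0 where "\<omega>0 = max 1 (T / hm)"
  show ?thesis
  proof (intro exI conjI allI impI)
    show "\<omega>0 > 0" unfolding \<omega>0_def by simp
    fix \<omega> assume w0: "\<omega>0 \<le> \<omega>"
    have w: "\<omega> > 0" using w0 unfolding \<omega>0_def by simp
    define Bd where "Bd = C / sqrt (\<omega> * hm)"
    have Bd0: "Bd \<ge> 0" unfolding Bd_def using C0 w hm by simp
    have JB: "\<bar>Jr \<mu>s (\<omega> * h x)\<bar> \<le> Bd" if x: "x \<in> {a..b}" for x
    proof -
      have "h x \<ge> hm" unfolding hm_def using xm x by blast
      hence "\<omega> * h x \<ge> \<omega> * hm" using w by simp
      moreover have "\<omega> * hm \<ge> T" using w0 hm unfolding \<omega>0_def by (simp add: field_simps)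
      ultimately have t: "\<omega> * h x \<ge> T" "\<omega> * h x \<ge> \<omega> * hm" by auto
      have "\<bar>Jr \<mu>s (\<omega> * h x)\<bar> \<le> C / sqrt (\<omega> * h x)" using CT t by blast
      also have "\<dots> \<le> C / sqrt (\<omega> * hm)"
        using t(2) C0 w hm by (intro divide_left_mono) (auto intro: real_sqrt_le_mono)
      finally show ?thesis unfolding Bd_def .
    qed
    have "\<bar>DF m \<omega>\<bar> \<le> \<bar>rr \<nu> f h m b / deriv h b\<bar> * Bd + \<bar>rr \<nu> f h m a / deriv h a\<bar> * Bd"
    proof -
      have "\<bar>DF m \<omega>\<bar> \<le> \<bar>rr \<nu> f h m b / deriv h b\<bar> * \<bar>Jr \<mu>s (\<omega> * h b)\<bar> + \<bar>rr \<nu> f h m a / deriv h a\<bar> * \<bar>Jr \<mu>s (\<omega> * h a)\<bar>"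
        unfolding DF_def \<mu>s_def[symmetric] abs_mult[symmetric] by (rule abs_triangle_ineq4)
      also have "\<dots> \<le> \<bar>rr \<nu> f h m b / deriv h b\<bar> * Bd + \<bar>rr \<nu> f h m a / deriv h a\<bar> * Bd"
        using JB[of a] JB[of b] ab by (intro add_mono mult_left_mono) auto
      finally show ?thesis .
    qed
    hence DFb: "\<bar>DF m \<omega>\<bar> \<le> Ab * Bd" unfolding Ab_def by (simp add: algebra_simps)
    have IIb: "\<bar>II (Suc m) \<omega>\<bar> \<le> M * Bd * (b - a)"
    proof -
      have "norm (integral {a..b} (\<lambda>x. rr \<nu> f h (Suc m) x * Jr \<mu>s (\<omega> * h x))) \<le> M * Bd * (b - a)"
      proof (rule integral_bound)
        show "a \<le> b" using ab by simp
        show "continuous_on {a..b} (\<lambda>x. rr \<nu> f h (Suc m) x * Jr \<mu>s (\<omega> * h x))" by (rule integrand_cont[OF w])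
        fix x assume x: "x \<in> {a..b}"
        have "\<bar>rr \<nu> f h (Suc m) x\<bar> \<le> M" unfolding M_def using xM x by blast
        thus "norm (rr \<nu> f h (Suc m) x * Jr \<mu>s (\<omega> * h x)) \<le> M * Bd"
          using JB[OF x] Bd0 by (simp add: abs_mult mult_mono')
      qed
      thus ?thesis unfolding II_def \<mu>s_def by simp
    qed
    have IIm: "\<bar>II m \<omega>\<bar> \<le> (Ab + M * (b - a)) * Bd / \<omega>"
    proof -
      have e: "II m \<omega> = (DF m \<omega> - II (Suc m) \<omega>) / \<omega>" using IBP[OF w, of m] w by (simp add: field_simps)
      have "\<bar>DF m \<omega> - II (Suc m) \<omega>\<bar> \<le> Ab * Bd + M * Bd * (b - a)" using DFb IIb by linarith
      thus ?thesis unfolding e using w by (simp add: divide_right_mono algebra_simps)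
    qed
    have "\<bar>II 0 \<omega> - (\<Sum>k=1..m. (-1)^(k-1) / \<omega>^k * DF (k-1) \<omega>)\<bar> = \<bar>II m \<omega>\<bar> / \<omega>^m"
      using telescope[OF w, of m] w by (simp add: abs_mult power_abs)
    also have "\<dots> \<le> (Ab + M * (b - a)) * Bd / \<omega> / \<omega>^m"
      using IIm w by (intro divide_right_mono) auto
    also have "\<dots> = K * (1 / (\<omega>^(Suc m) * sqrt \<omega>))"
      unfolding K_def Bd_def using w hm by (simp add: real_sqrt_mult field_simps)
    also have "\<dots> = K * \<omega> powr (- real m - 3/2)" using powr_fact[OF w] by simp
    finally show "\<bar>II 0 \<omega> - (\<Sum>k=1..m. (-1)^(k-1) / \<omega>^k * DF (k-1) \<omega>)\<bar> \<le> K * \<omega> powr (- real m - 3/2)" .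
  qed
qed

end


lemma term_id:
  assumes s: "s = 1 \<or> s = -1" and k: "k \<ge> 1" and hy: "hy > 0" and w: "\<omega> > 0"
    and sg: "\<sigma> = complex_of_real (s^(k-1) * R)" and dg: "dgy = s * D" and gy: "gy = s * hy"
  shows "\<sigma> / complex_of_real dgy * BesselJ (complex_of_real (\<nu> + real k)) (complex_of_real (\<omega> * gy))
        = kap s \<nu> * complex_of_real (R / D * Jr (\<nu> + real k) (\<omega> * hy))"
proof -
  have t: "\<omega> * gy \<noteq> 0" using s hy w gy by auto
  have B: "BesselJ (complex_of_real (\<nu> + real k)) (complex_of_real (\<omega> * gy))
        = kap s (\<nu> + real k) * complex_of_real (Jr (\<nu> + real k) (\<omega> * hy))"
  proof -
    have e1: "kap (\<omega> * gy) (\<nu> + real k) = kap s (\<nu> + real k)" using s hy w gy unfolding kap_def by (auto simp: mult_less_0_iff)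
    have e2: "\<bar>\<omega> * gy\<bar> = \<omega> * hy" using s hy w gy by (auto simp: abs_mult)
    show ?thesis using BesselJ_real[OF t, of "\<nu> + real k"] unfolding e1 e2 .
  qed
  obtain j where j: "k = Suc j" using k by (cases k) auto
  show ?thesis
    using s
  proof
    assume s1: "s = 1"
    show ?thesis unfolding B sg dg kap_shift s1 by simp
  next
    assume s1: "s = -1"
    have pm: "(-1::complex)^j * (-1)^Suc j = -1"
      by (simp flip: power_add add: power_mult[symmetric] mult_2[symmetric])
    have "complex_of_real ((-1)^j * R) / complex_of_real (-D) * ((-1)^Suc j * kap (-1) \<nu> * complex_of_real (Jr (\<nu> + real k) (\<omega> * hy)))
         = ((-1::complex)^j * (-1)^Suc j) * (- (complex_of_real R / complex_of_real D)) * kap (-1) \<nu> * complex_of_real (Jr (\<nu> + real k) (\<omega> * hy))"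
      by (simp add: mult_ac)
    also have "\<dots> = kap (-1) \<nu> * complex_of_real (R / D * Jr (\<nu> + real k) (\<omega> * hy))"
      unfolding pm by (simp add: mult_ac)
    finally have "complex_of_real ((-1)^j * R) / complex_of_real (-D) * ((-1)^Suc j * kap (-1) \<nu> * complex_of_real (Jr (\<nu> + real k) (\<omega> * hy)))
         = kap (-1) \<nu> * complex_of_real (R / D * Jr (\<nu> + real k) (\<omega> * hy))" .
    thus ?thesis unfolding B unfolding sg dg kap_shift s1 j by simp
  qed
qed

theorem theorem2p3:
  fixes \<nu> a b :: real and f g :: "real \<Rightarrow> real" and m :: nat
  assumes "a < b"
    and "smooth_fun f" and "smooth_fun g"
    and "\<forall>x\<in>{a..b}. g x \<noteq> 0"
    and "\<forall>x\<in>{a..b}. deriv g x \<noteq> 0"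
    and "m \<ge> 1"
  shows "(\<lambda>\<omega>. Hnu \<nu> f g a b \<omega> - QA \<nu> f g a b m \<omega>)
           \<in> O[at_top](\<lambda>\<omega>. complex_of_real (\<omega> powr (- real m - 3 / 2)))"
proof -
  note ab = assms(1) and sf = assms(2) and sg = assms(3) and g0 = assms(4) and g1 = assms(5)
  have gd: "g differentiable (at x)" for x using sg unfolding smooth_fun_def by (metis funpow_0)
  have g'd: "deriv g differentiable (at x)" for x
    using sg unfolding smooth_fun_def by (metis funpow_0 funpow_Suc_right o_apply)
  define s :: real where "s = (if g a > 0 then 1 else -1)"
  have s: "s = 1 \<or> s = -1" unfolding s_def by auto
  have ss: "s * s = 1" using s by auto
  define h where "h x = s * g x" for x
  have gh: "g = (\<lambda>x. s * h x)" unfolding h_def using ss by (auto simp: mult.assoc[symmetric])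
  have hcont: "continuous_on UNIV h" unfolding h_def
    using gd by (intro continuous_on_mult continuous_on_const continuous_at_imp_continuous_on)
                (auto intro: differentiable_imp_continuous_within)
  have dh: "deriv h x = s * deriv g x" for x
    unfolding h_def[abs_def] by (rule DERIV_imp_deriv, rule DERIV_cmult) (use gd in \<open>simp add: DERIV_deriv_iff_real_differentiable\<close>)
  have dhcont: "continuous_on UNIV (deriv h)" unfolding dh[abs_def]
    using g'd by (intro continuous_on_mult continuous_on_const continuous_at_imp_continuous_on)
                (auto intro: differentiable_imp_continuous_within)
  have ga: "g a \<noteq> 0" using g0 ab by auto
  have ha: "h a > 0" unfolding h_def s_def using ga by auto
  have hpos_ab: "h x > 0" if x: "x \<in> {a..b}" for x
  proof (rule ccontr)
    assume "\<not> h x > 0"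
    hence "(\<lambda>x. - h x) a \<le> 0" "0 \<le> (\<lambda>x. - h x) x" using ha by auto
    moreover have "a \<le> x" using x by simp
    moreover have "continuous_on {a..x} (\<lambda>x. - h x)"
      using hcont by (intro continuous_on_minus) (rule continuous_on_subset, auto)
    ultimately obtain y where y: "a \<le> y" "y \<le> x" "- h y = 0" using IVT'[of "\<lambda>x. - h x" a 0 x] by auto
    hence "g y = 0" unfolding h_def using s by auto
    moreover have "y \<in> {a..b}" using y x by auto
    ultimately show False using g0 by blast
  qed
  define U where "U = {x. 0 < h x} \<inter> {x. deriv h x \<noteq> 0}"
  have U: "open U" unfolding U_def
    by (intro open_Int open_Collect_less open_Collect_neq hcont dhcont continuous_on_const)
  have abU: "{a..b} \<subseteq> U" unfolding U_def using hpos_ab g1 dh s by auto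
  have hpos: "\<forall>x\<in>U. h x > 0" and h1: "\<forall>x\<in>U. deriv h x \<noteq> 0" unfolding U_def by auto
  have fU: "smooth_on U f" by (rule smooth_fun_smooth_on[OF sf])
  have hU: "smooth_on U h" unfolding h_def
    by (intro smooth_on_mult[OF U] smooth_on_const smooth_fun_smooth_on[OF sg])
  obtain K \<omega>0 where w0: "\<omega>0 > 0" and KB: "\<forall>\<omega>\<ge>\<omega>0.
     \<bar>II \<nu> a b f h 0 \<omega> - (\<Sum>k=1..m. (-1)^(k-1) / \<omega>^k * DF \<nu> a b f h (k-1) \<omega>)\<bar> \<le> K * \<omega> powr (- real m - 3/2)"
    using real_bound[OF ab U abU hpos h1 fU hU, of \<nu> m] by blast
  have main: "Hnu \<nu> f g a b \<omega> - QA \<nu> f g a b m \<omega> =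
      kap s \<nu> * complex_of_real (II \<nu> a b f h 0 \<omega> - (\<Sum>k=1..m. (-1)^(k-1) / \<omega>^k * DF \<nu> a b f h (k-1) \<omega>))"
    if w: "\<omega> > 0" for \<omega>
  proof -
    have H: "Hnu \<nu> f g a b \<omega> = kap s \<nu> * complex_of_real (II \<nu> a b f h 0 \<omega>)"
    proof -
      have pt: "complex_of_real (f x) * BesselJ (complex_of_real \<nu>) (complex_of_real (\<omega> * g x))
             = kap s \<nu> * complex_of_real (f x * Jr \<nu> (\<omega> * h x))" if x: "x \<in> {a..b}" for x
      proof -
        have hx: "h x > 0" using hpos_ab[OF x] .
        have t: "\<omega> * g x \<noteq> 0" using hx w gh s by auto
        have "kap (\<omega> * g x) \<nu> = kap s \<nu>" using s hx w gh unfolding kap_def by (auto simp: mult_less_0_iff)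
        moreover have "\<bar>\<omega> * g x\<bar> = \<omega> * h x" using s hx w gh by (auto simp: abs_mult)
        ultimately show ?thesis using BesselJ_real[OF t, of \<nu>] by simp
      qed
      have ci: "(\<lambda>x. f x * Jr \<nu> (\<omega> * h x)) integrable_on {a..b}"
        using integrand_cont[OF ab U abU hpos h1 fU hU w, of \<nu> 0 \<nu>]
        by (intro integrable_continuous_interval) simp
      have "((\<lambda>x. kap s \<nu> * complex_of_real (f x * Jr \<nu> (\<omega> * h x))) has_integral
             kap s \<nu> * complex_of_real (integral {a..b} (\<lambda>x. f x * Jr \<nu> (\<omega> * h x)))) {a..b}"
        by (intro has_integral_mult_right has_integral_of_real integrable_integral ci)
      hence "integral {a..b} (\<lambda>x. kap s \<nu> * complex_of_real (f x * Jr \<nu> (\<omega> * h x))) =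
             kap s \<nu> * complex_of_real (integral {a..b} (\<lambda>x. f x * Jr \<nu> (\<omega> * h x)))"
        by (rule integral_unique)
      moreover have "Hnu \<nu> f g a b \<omega> = integral {a..b} (\<lambda>x. kap s \<nu> * complex_of_real (f x * Jr \<nu> (\<omega> * h x)))"
        unfolding Hnu_def by (rule integral_cong) (rule pt)
      moreover have "II \<nu> a b f h 0 \<omega> = integral {a..b} (\<lambda>x. f x * Jr \<nu> (\<omega> * h x))"
        using II_def[OF ab U abU hpos h1 fU hU] by simp
      ultimately show ?thesis by simp
    qed
    have Q: "QA \<nu> f g a b m \<omega> = kap s \<nu> * complex_of_real (\<Sum>k=1..m. (-1)^(k-1) / \<omega>^k * DF \<nu> a b f h (k-1) \<omega>)"
    proof -
      have sgm: "sigma \<nu> f g j y = complex_of_real (s^j * rr \<nu> f h j y)" if "y \<in> U" for y j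
        by (rule sigma_rr[OF U s gh hpos h1 fU hU that])
      have aU: "a \<in> U" and bU: "b \<in> U" using abU ab by auto
      have tm: "1 / complex_of_real ((-\<omega>) ^ k) *
            (sigma \<nu> f g (k - 1) b / complex_of_real (deriv g b)
               * BesselJ (complex_of_real (\<nu> + real k)) (complex_of_real (\<omega> * g b))
             - sigma \<nu> f g (k - 1) a / complex_of_real (deriv g a)
               * BesselJ (complex_of_real (\<nu> + real k)) (complex_of_real (\<omega> * g a)))
          = kap s \<nu> * complex_of_real (- ((-1)^(k-1) / \<omega>^k * DF \<nu> a b f h (k-1) \<omega>))"
        if k: "k \<in> {1..m}" for k
      proof -
        have k1: "k \<ge> 1" using k by simp
        have dgx: "deriv g x = s * deriv h x" for x using dh[of x] ss by (simp add: mult.assoc[symmetric])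
        have ghx: "g x = s * h x" for x using gh by simp
        note tb = term_id[OF s k1 hpos[rule_format, OF bU] w sgm[OF bU] dgx ghx]
        note ta = term_id[OF s k1 hpos[rule_format, OF aU] w sgm[OF aU] dgx ghx]
        define Xb where "Xb = rr \<nu> f h (k-1) b / deriv h b * Jr (\<nu> + real k) (\<omega> * h b)"
        define Xa where "Xa = rr \<nu> f h (k-1) a / deriv h a * Jr (\<nu> + real k) (\<omega> * h a)"
        have DFk: "DF \<nu> a b f h (k-1) \<omega> = Xb - Xa"
          unfolding DF_def[OF ab U abU hpos h1 fU hU] Xa_def Xb_def using k1 by simp
        have pw: "1 / (-\<omega>)^k = - ((-1)^(k-1) / \<omega>^k)"
        proof -
          obtain j where j: "k = Suc j" using k1 by (cases k) auto
          show ?thesis unfolding j using w by (simp add: power_minus' field_simps)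
        qed
        have "1 / complex_of_real ((-\<omega>) ^ k) * (kap s \<nu> * complex_of_real Xb - kap s \<nu> * complex_of_real Xa)
            = kap s \<nu> * complex_of_real (1 / (-\<omega>)^k * (Xb - Xa))"
          by (simp add: algebra_simps diff_divide_distrib)
        thus ?thesis unfolding tb ta Xa_def[symmetric] Xb_def[symmetric] DFk pw by simp
      qed
      have "QA \<nu> f g a b m \<omega> = - (\<Sum>k=1..m. kap s \<nu> * complex_of_real (- ((-1)^(k-1) / \<omega>^k * DF \<nu> a b f h (k-1) \<omega>)))"
        unfolding QA_def using tm by (intro arg_cong[where f = uminus] sum.cong) auto
      also have "\<dots> = kap s \<nu> * complex_of_real (\<Sum>k=1..m. (-1)^(k-1) / \<omega>^k * DF \<nu> a b f h (k-1) \<omega>)"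
        by (simp add: sum_distrib_left sum_negf)
      finally show ?thesis .
    qed
    show ?thesis unfolding H Q by (simp add: algebra_simps)
  qed
  show ?thesis
  proof (rule bigoI[where c = K])
    show "\<forall>\<^sub>F \<omega> in at_top. norm (Hnu \<nu> f g a b \<omega> - QA \<nu> f g a b m \<omega>) \<le> K * norm (complex_of_real (\<omega> powr (- real m - 3 / 2)))"
      unfolding eventually_at_top_linorder
    proof (intro exI allI impI)
      fix \<omega> assume w: "\<omega> \<ge> \<omega>0"
      hence wp: "\<omega> > 0" using w0 by simp
      show "norm (Hnu \<nu> f g a b \<omega> - QA \<nu> f g a b m \<omega>) \<le> K * norm (complex_of_real (\<omega> powr (- real m - 3 / 2)))"
        unfolding main[OF wp] norm_mult norm_kap norm_of_real using KB w by simp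
    qed
  qed
qed

end
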